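(* Consider a cellular network with $n$ base stations $\mathcal{N}=\{1,\dots,n\}$, base station $i$ serving a nonempty set $\mathcal{J}_i$ of users (pairwise disjoint), channel gains $g_{kj}>0$, noise power $\sigma^2>0$, and $$f_i(\mathbf{x};\mathbf{r},\mathbf{p})=\sum_{j\in\mathcal{J}_i}\frac{r_{ij}}{\log\Big(1+\frac{p_i g_{ij}}{\sum_{k\ne i} p_k g_{kj} x_k+\sigma^2}\Big)}.$$ Let $\mathbf{d}_{\min}>\mathbf{0}$ and consider Problem P0: $$\min_{\mathbf{p}>\mathbf{0},\ \mathbf{r}>\mathbf{0},\ \mathbf{0}<\mathbf{x}\le\mathbf{1}} \mathbf{x}^T\mathbf{p}\quad\text{s.t.}\quad \mathbf{x}=\mathbf{f}(\mathbf{x};\mathbf{r},\mathbf{p}),\quad \mathbf{r}\ge\mathbf{d}_{\min}.$$ Then the optimal rate vector of Problem P0 satisfies $\mathbf{r}^\star=\mathbf{d}_{\min}$.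
   Context: Vector inequalities are componentwise; $\log$ is natural logarithm. *)

theory Defs
  imports Complex_Main
begin

text \<open>Base stations are indexed by {1..n}; users have an arbitrary type 'u;
  J i is the set of users served by base station i. Vectors x, p are functions
  nat => real (only the entries in {1..n} matter); the rate vector r and the
  demand vector dmin are indexed by pairs (i, j) with j in J i.\<close>

definition load_fun ::
  "nat \<Rightarrow> (nat \<Rightarrow> 'u set) \<Rightarrow> (nat \<Rightarrow> 'u \<Rightarrow> real) \<Rightarrow> real \<Rightarrow>
   (nat \<Rightarrow> real) \<Rightarrow> (nat \<Rightarrow> 'u \<Rightarrow> real) \<Rightarrow> (nat \<Rightarrow> real) \<Rightarrow> nat \<Rightarrow> real" where
  "load_fun n J g \<sigma>2 x r p i =
     (\<Sum>j\<in>J i. r i j /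
        ln (1 + p i * g i j / ((\<Sum>k\<in>{1..n} - {i}. p k * g k j * x k) + \<sigma>2)))"

definition P0_feasible ::
  "nat \<Rightarrow> (nat \<Rightarrow> 'u set) \<Rightarrow> (nat \<Rightarrow> 'u \<Rightarrow> real) \<Rightarrow> real \<Rightarrow> (nat \<Rightarrow> 'u \<Rightarrow> real) \<Rightarrow>
   (nat \<Rightarrow> real) \<Rightarrow> (nat \<Rightarrow> 'u \<Rightarrow> real) \<Rightarrow> (nat \<Rightarrow> real) \<Rightarrow> bool" where
  "P0_feasible n J g \<sigma>2 dmin x r p \<longleftrightarrow>
     (\<forall>i\<in>{1..n}. 0 < p i \<and> 0 < x i \<and> x i \<le> 1 \<and> x i = load_fun n J g \<sigma>2 x r p i) \<and>
     (\<forall>i\<in>{1..n}. \<forall>j\<in>J i. 0 < r i j \<and> dmin i j \<le> r i j)"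

definition P0_cost :: "nat \<Rightarrow> (nat \<Rightarrow> real) \<Rightarrow> (nat \<Rightarrow> real) \<Rightarrow> real" where
  "P0_cost n x p = (\<Sum>i\<in>{1..n}. x i * p i)"

definition P0_optimal ::
  "nat \<Rightarrow> (nat \<Rightarrow> 'u set) \<Rightarrow> (nat \<Rightarrow> 'u \<Rightarrow> real) \<Rightarrow> real \<Rightarrow> (nat \<Rightarrow> 'u \<Rightarrow> real) \<Rightarrow>
   (nat \<Rightarrow> real) \<Rightarrow> (nat \<Rightarrow> 'u \<Rightarrow> real) \<Rightarrow> (nat \<Rightarrow> real) \<Rightarrow> bool" where
  "P0_optimal n J g \<sigma>2 dmin x r p \<longleftrightarrow>
     P0_feasible n J g \<sigma>2 dmin x r p \<and>
     (\<forall>x' r' p'. P0_feasible n J g \<sigma>2 dmin x' r' p' \<longrightarrow> P0_cost n x p \<le> P0_cost n x' p')"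

end

theory Submission
  imports Defs
begin

lemma lnpos_aux: "0 < (a::real) \<Longrightarrow> 0 \<le> S \<Longrightarrow> 0 < s \<Longrightarrow> 0 < ln (1 + a / (S + s))"
  by (simp add: ln_gt_zero)

lemma lnmono_aux: "0 < (a::real) \<Longrightarrow> 0 \<le> S' \<Longrightarrow> S' \<le> S \<Longrightarrow> 0 < s
   \<Longrightarrow> ln (1 + a / (S + s)) \<le> ln (1 + a / (S' + s))"
  apply (subst ln_le_cancel_iff)
    apply (simp add: add_pos_nonneg)
   apply (simp add: add_pos_nonneg)
  apply (simp add: frac_le add_pos_nonneg)
  done

theorem lemma7:
  fixes n :: nat and J :: "nat \<Rightarrow> 'u set" and g :: "nat \<Rightarrow> 'u \<Rightarrow> real"
    and \<sigma>2 :: real and dmin r :: "nat \<Rightarrow> 'u \<Rightarrow> real" and x p :: "nat \<Rightarrow> real"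
  assumes J_fin: "\<forall>i\<in>{1..n}. finite (J i)"
    and J_ne: "\<forall>i\<in>{1..n}. J i \<noteq> {}"
    and J_disj: "\<forall>i\<in>{1..n}. \<forall>i'\<in>{1..n}. i \<noteq> i' \<longrightarrow> J i \<inter> J i' = {}"
    and g_pos: "\<forall>k\<in>{1..n}. \<forall>i\<in>{1..n}. \<forall>j\<in>J i. 0 < g k j"
    and sigma_pos: "0 < \<sigma>2"
    and dmin_pos: "\<forall>i\<in>{1..n}. \<forall>j\<in>J i. 0 < dmin i j"
    and opt: "P0_optimal n J g \<sigma>2 dmin x r p"
  shows "\<forall>i\<in>{1..n}. \<forall>j\<in>J i. r i j = dmin i j"
proof (rule ccontr)
  assume "\<not> ?thesis"
  then obtain i j0 where i: "i \<in> {1..n}" and j0: "j0 \<in> J i" and ne: "r i j0 \<noteq> dmin i j0" by blast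
  have feas: "P0_feasible n J g \<sigma>2 dmin x r p" and
    min: "\<And>x' r' p'. P0_feasible n J g \<sigma>2 dmin x' r' p' \<Longrightarrow> P0_cost n x p \<le> P0_cost n x' p'"
    using opt unfolding P0_optimal_def by auto
  have pp: "\<And>k. k \<in> {1..n} \<Longrightarrow> 0 < p k" and xp: "\<And>k. k \<in> {1..n} \<Longrightarrow> 0 < x k"
    and x1: "\<And>k. k \<in> {1..n} \<Longrightarrow> x k \<le> 1"
    and xfix: "\<And>k. k \<in> {1..n} \<Longrightarrow> x k = load_fun n J g \<sigma>2 x r p k"
    and rp: "\<And>k j. k \<in> {1..n} \<Longrightarrow> j \<in> J k \<Longrightarrow> 0 < r k j"
    and rd: "\<And>k j. k \<in> {1..n} \<Longrightarrow> j \<in> J k \<Longrightarrow> dmin k j \<le> r k j"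
    using feas unfolding P0_feasible_def by blast+
  define L where "L = (\<lambda>y k j. ln (1 + p k * g k j / ((\<Sum>k'\<in>{1..n} - {k}. p k' * g k' j * y k') + \<sigma>2)))"
  have lf: "\<And>y r k. load_fun n J g \<sigma>2 y r p k = (\<Sum>j\<in>J k. r k j / L y k j)"
    unfolding load_fun_def L_def by simp
  have Ssum: "\<And>y k j. k \<in> {1..n} \<Longrightarrow> j \<in> J k \<Longrightarrow> (\<forall>k'\<in>{1..n}. 0 < y k') \<Longrightarrow>
      0 \<le> (\<Sum>k'\<in>{1..n} - {k}. p k' * g k' j * y k')"
    by (intro sum_nonneg) (use pp g_pos in \<open>auto intro!: mult_nonneg_nonneg less_imp_le\<close>)
  have Lpos: "\<And>y k j. k \<in> {1..n} \<Longrightarrow> j \<in> J k \<Longrightarrow> (\<forall>k'\<in>{1..n}. 0 < y k') \<Longrightarrow> 0 < L y k j"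
    unfolding L_def using pp g_pos sigma_pos Ssum
    by (intro lnpos_aux) auto
  have r_gt: "r i j0 > dmin i j0" using rd[OF i j0] ne by auto
  define L0 where "L0 = L x i j0"
  have xpos: "\<forall>k'\<in>{1..n}. 0 < x k'" using xp by auto
  have L0pos: "0 < L0" unfolding L0_def using Lpos[OF i j0 xpos] .
  define \<delta> where "\<delta> = min (x i / 2) ((r i j0 - dmin i j0) / L0)"
  have dpos: "0 < \<delta>" unfolding \<delta>_def using xp[OF i] r_gt L0pos by auto
  have dlt: "\<delta> < x i" unfolding \<delta>_def using xp[OF i] by auto
  have dL: "\<delta> * L0 \<le> r i j0 - dmin i j0"
    unfolding \<delta>_def using L0pos by (simp add: min_def field_simps split: if_splits)
  define x' where "x' = x(i := x i - \<delta>)"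
  define r' where "r' = (\<lambda>k j. if k = i \<and> j = j0 then r i j0 - \<delta> * L0 else r k j * L x' k j / L x k j)"
  have x'pos: "\<forall>k'\<in>{1..n}. 0 < x' k'" using xp dlt unfolding x'_def by auto
  have x'le: "\<And>k. x' k \<le> x k" unfolding x'_def using dpos by auto
  have Lmono: "\<And>k j. k \<in> {1..n} \<Longrightarrow> j \<in> J k \<Longrightarrow> L x k j \<le> L x' k j"
  proof -
    fix k j assume k: "k \<in> {1..n}" and j: "j \<in> J k"
    show "L x k j \<le> L x' k j" unfolding L_def
    proof (rule lnmono_aux)
      show "0 < p k * g k j" using pp[OF k] g_pos k j by auto
      show "0 \<le> (\<Sum>k'\<in>{1..n} - {k}. p k' * g k' j * x' k')" using Ssum[OF k j x'pos] .
      show "(\<Sum>k'\<in>{1..n} - {k}. p k' * g k' j * x' k') \<le> (\<Sum>k'\<in>{1..n} - {k}. p k' * g k' j * x k')"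
        by (intro sum_mono mult_left_mono x'le) (use pp g_pos k j in \<open>auto intro!: mult_nonneg_nonneg less_imp_le\<close>)
    qed (rule sigma_pos)
  qed
  have Li: "\<And>j. L x' i j = L x i j"
    unfolding L_def x'_def by (intro arg_cong[where f=ln] arg_cong2[where f="(+)"] refl
        arg_cong2[where f="(/)"] sum.cong) auto
  have feas': "P0_feasible n J g \<sigma>2 dmin x' r' p"
    unfolding P0_feasible_def
  proof (intro conjI ballI)
    fix k assume k: "k \<in> {1..n}"
    show "0 < p k" using pp[OF k] .
    show "0 < x' k" using x'pos k by auto
    show "x' k \<le> 1" using x'le[of k] x1[OF k] by auto
    show "x' k = load_fun n J g \<sigma>2 x' r' p k"
    proof (cases "k = i")
      case False
      have "load_fun n J g \<sigma>2 x' r' p k = (\<Sum>j\<in>J k. r k j / L x k j)"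
        unfolding lf
      proof (rule sum.cong)
        fix j assume j: "j \<in> J k"
        have "L x' k j > 0" using Lpos[OF k j x'pos] .
        moreover have "L x k j > 0" using Lpos[OF k j xpos] .
        ultimately show "r' k j / L x' k j = r k j / L x k j" unfolding r'_def using False by simp
      qed simp
      also have "\<dots> = x k" using xfix[OF k] lf by simp
      finally show ?thesis unfolding x'_def using False by simp
    next
      case True
      have fin: "finite (J i)" using J_fin i by auto
      have "load_fun n J g \<sigma>2 x' r' p k = r' i j0 / L x' i j0 + (\<Sum>j\<in>J i - {j0}. r' i j / L x' i j)"
        unfolding lf True using fin j0 by (simp add: sum.remove)
      also have "(\<Sum>j\<in>J i - {j0}. r' i j / L x' i j) = (\<Sum>j\<in>J i - {j0}. r i j / L x i j)"
      proof (rule sum.cong)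
        fix j assume j: "j \<in> J i - {j0}"
        have "L x i j > 0" using Lpos[OF i _ xpos] j by auto
        then show "r' i j / L x' i j = r i j / L x i j" unfolding r'_def Li using j by simp
      qed simp
      also have "r' i j0 / L x' i j0 = r i j0 / L x i j0 - \<delta>"
        unfolding r'_def Li L0_def[symmetric] using L0pos by (simp add: field_simps)
      also have "r i j0 / L x i j0 - \<delta> + (\<Sum>j\<in>J i - {j0}. r i j / L x i j)
          = (\<Sum>j\<in>J i. r i j / L x i j) - \<delta>"
        using fin j0 by (simp add: sum.remove)
      also have "\<dots> = x i - \<delta>" using xfix[OF i] lf by simp
      moreover have "x' k = x i - \<delta>" unfolding x'_def True by simp
      ultimately show ?thesis by simp
    qed
  next
    fix k j assume k: "k \<in> {1..n}" and j: "j \<in> J k"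
    have "dmin k j \<le> r' k j"
    proof (cases "k = i \<and> j = j0")
      case True
      then show ?thesis unfolding r'_def using dL by auto
    next
      case False
      have a: "L x k j > 0" using Lpos[OF k j xpos] .
      have "r k j \<le> r k j * L x' k j / L x k j"
        using a Lmono[OF k j] rp[OF k j] by (simp add: field_simps)
      then show ?thesis unfolding r'_def using False rd[OF k j] by auto
    qed
    then show "dmin k j \<le> r' k j" .
    show "0 < r' k j" using \<open>dmin k j \<le> r' k j\<close> dmin_pos k j by fastforce
  qed
  have "P0_cost n x p \<le> P0_cost n x' p" using min[OF feas'] .
  moreover have "P0_cost n x' p = P0_cost n x p - \<delta> * p i"
  proof -
    have "P0_cost n x' p = (\<Sum>k\<in>{1..n}. x k * p k - (if k = i then \<delta> * p i else 0))"
      unfolding P0_cost_def x'_def by (intro sum.cong) (auto simp: algebra_simps)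
    also have "\<dots> = P0_cost n x p - \<delta> * p i"
      unfolding P0_cost_def sum_subtractf using i by simp
    finally show ?thesis .
  qed
  moreover have "0 < \<delta> * p i" using dpos pp[OF i] by simp
  ultimately show False by simp
qed

end
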